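(* Let $\alpha_U,\alpha_W,\nu,\mu,k,\mu_U,\mu_W$ be positive parameters, $u^\sharp>0$, and positive thresholds $\underline{L_U},\underline{A_U},\overline{L_W},\overline{A_W}$. For $x=(L_U,A_U,L_W,A_W)\in\mathbb{R}_+^4$ and $u\in[0,u^\sharp]$ define $$f(x,u)=\big(F_L(x),F_A(x),G_L(x)+u,G_A(x)\big),$$ where $F_L(x)=\alpha_U A_U\frac{A_U}{A_U+A_W}-\nu L_U-\mu(1+k(L_U+L_W))L_U$ (extended by continuity, i.e. with the first term equal to $0$, when $A_U=A_W=0$), $F_A(x)=\nu L_U-\mu_U A_U$, $G_L(x)=\alpha_W A_W-\nu L_W-\mu(1+k(L_U+L_W))L_W$, $G_A(x)=\nu L_W-\mu_W A_W$. Let $\mathbb{D}=\{(L_U,A_U,L_W,A_W,u)\in\mathbb{R}_+^4\times[0,u^\sharp]: L_U\le\underline{L_U},\ A_U\le\underline{A_U},\ L_W\ge\overline{L_W},\ A_W\ge\overline{A_W}\}$, and define $f^\sharp:\mathbb{R}_+^4\times[0,u^\sharp]\to\mathbb{R}^4$ by $f^\sharp(x,u)=f(x,u^\sharp)$. Then $$\mathbb{V}(f,\mathbb{D})=\mathbb{V}(f^\sharp,\mathbb{D}).$$ Equivalently, $x_0\in\mathbb{R}_+^4$ belongs to $\mathbb{V}(f,\mathbb{D})$ if and only if the solution of $\dot x(t)=f(x(t),u^\sharp)$, $x(0)=x_0$, satisfies $(x(t),u^\sharp)\in\mathbb{D}$ for all $t\ge0$.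
   Context: Here $\mathbb{X}=\mathbb{R}_+^4$, $\mathbb{U}=[0,u^\sharp]$, and the set of control paths is $\mathcal{U}=\{u(\cdot):[0,+\infty)\to[0,u^\sharp]\text{ measurable}\}$. For a dynamics $f$ (resp. $f^\sharp$) and $u(\cdot)\in\mathcal{U}$, $\Psi_f(t,x_0,u(\cdot))$ denotes the solution at time $t$ of $\dot x(t)=f(x(t),u(t))$, $x(0)=x_0$ (these solutions exist, are unique, stay in $\mathbb{R}_+^4$ and are defined for all $t\ge0$). The viability kernel for a desirable set $\mathbb{D}\subset\mathbb{X}\times\mathbb{U}$ is $\mathbb{V}(f,\mathbb{D})=\{x_0\in\mathbb{X}:\exists u(\cdot)\in\mathcal{U},\ (\Psi_f(t,x_0,u(\cdot)),u(t))\in\mathbb{D}\ \forall t\ge0\}$. *)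

theory Defs
  imports "HOL-Analysis.Analysis"
begin

type_synonym state = "real \<times> real \<times> real \<times> real"  (* (L_U, A_U, L_W, A_W) *)

definition stateX :: "state set" where
  "stateX = {(a, b, c, d). 0 \<le> a \<and> 0 \<le> b \<and> 0 \<le> c \<and> 0 \<le> d}"

definition admissible_control :: "real \<Rightarrow> (real \<Rightarrow> real) \<Rightarrow> bool" where
  "admissible_control us u \<longleftrightarrow>
     u \<in> borel_measurable (restrict_space lebesgue {0..}) \<and> (\<forall>t\<ge>0. u t \<in> {0..us})"

definition is_solution :: "(state \<Rightarrow> real \<Rightarrow> state) \<Rightarrow> (real \<Rightarrow> real) \<Rightarrow> state \<Rightarrow> (real \<Rightarrow> state) \<Rightarrow> bool" where
  "is_solution F u x0 x \<longleftrightarrow> x 0 = x0 \<and> (\<forall>t\<ge>0. x t \<in> stateX) \<and>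
     (\<forall>t\<ge>0. ((\<lambda>s. F (x s) (u s)) has_integral (x t - x0)) {0..t})"

definition viab :: "(state \<Rightarrow> real \<Rightarrow> state) \<Rightarrow> real \<Rightarrow> (state \<times> real) set \<Rightarrow> state set" where
  "viab F us D = {x0 \<in> stateX. \<exists>u x. admissible_control us u \<and> is_solution F u x0 x \<and>
      (\<forall>t\<ge>0. (x t, u t) \<in> D)}"

definition FL :: "real \<Rightarrow> real \<Rightarrow> real \<Rightarrow> real \<Rightarrow> state \<Rightarrow> real" where
  "FL \<alpha>U \<nu> \<mu> k x = (case x of (LU, AU, LW, AW) \<Rightarrow>
     (if AU + AW = 0 then 0 else \<alpha>U * AU * (AU / (AU + AW))) - \<nu> * LU - \<mu> * (1 + k * (LU + LW)) * LU)"

definition FA :: "real \<Rightarrow> real \<Rightarrow> state \<Rightarrow> real" where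
  "FA \<nu> \<mu>U x = (case x of (LU, AU, LW, AW) \<Rightarrow> \<nu> * LU - \<mu>U * AU)"

definition GL :: "real \<Rightarrow> real \<Rightarrow> real \<Rightarrow> real \<Rightarrow> state \<Rightarrow> real" where
  "GL \<alpha>W \<nu> \<mu> k x = (case x of (LU, AU, LW, AW) \<Rightarrow>
     \<alpha>W * AW - \<nu> * LW - \<mu> * (1 + k * (LU + LW)) * LW)"

definition GA :: "real \<Rightarrow> real \<Rightarrow> state \<Rightarrow> real" where
  "GA \<nu> \<mu>W x = (case x of (LU, AU, LW, AW) \<Rightarrow> \<nu> * LW - \<mu>W * AW)"

definition fdyn :: "real \<Rightarrow> real \<Rightarrow> real \<Rightarrow> real \<Rightarrow> real \<Rightarrow> real \<Rightarrow> real \<Rightarrow> state \<Rightarrow> real \<Rightarrow> state" where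
  "fdyn \<alpha>U \<alpha>W \<nu> \<mu> k \<mu>U \<mu>W x u =
     (FL \<alpha>U \<nu> \<mu> k x, FA \<nu> \<mu>U x, GL \<alpha>W \<nu> \<mu> k x + u, GA \<nu> \<mu>W x)"

definition desirable :: "real \<Rightarrow> real \<Rightarrow> real \<Rightarrow> real \<Rightarrow> real \<Rightarrow> (state \<times> real) set" where
  "desirable us LUb AUb LWb AWb = {((LU, AU, LW, AW), u).
     (LU, AU, LW, AW) \<in> stateX \<and> 0 \<le> u \<and> u \<le> us \<and>
     LU \<le> LUb \<and> AU \<le> AUb \<and> LW \<ge> LWb \<and> AW \<ge> AWb}"

end

theory Submission
  imports Defs
begin


lemma cont_UNIV_local:
  fixes f :: "real \<Rightarrow> 'b::topological_space"
  assumes "\<And>n::nat. continuous_on {-real n..real n} f"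
  shows "continuous_on UNIV f"
proof -
  have U: "UNIV = (\<Union>n\<in>(UNIV::nat set). {-real n<..<real n})"
  proof (auto)
    fix x :: real
    obtain n :: nat where "\<bar>x\<bar> < real n" using reals_Archimedean2 by blast
    then show "\<exists>n. - real n < x \<and> x < real n" by (intro exI[of _ n]) (auto simp: abs_less_iff)
  qed
  show ?thesis
  proof (subst U, rule continuous_on_open_UN)
    fix n :: nat
    show "continuous_on {-real n<..<real n} f"
      by (rule continuous_on_subset[OF assms[of n]]) auto
  qed simp
qed

lemma cmp1:
  fixes \<phi> h :: "real \<Rightarrow> real"
  assumes cont: "continuous_on {0..} \<phi>"
    and int: "\<And>t. t \<ge> 0 \<Longrightarrow> (h has_integral (\<phi> t - \<phi> 0)) {0..t}"
    and init: "\<phi> 0 \<le> 0"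
    and sign: "\<And>s. s \<ge> 0 \<Longrightarrow> \<phi> s \<ge> 0 \<Longrightarrow> h s \<le> 0"
    and t: "t \<ge> 0"
  shows "\<phi> t \<le> 0"
proof (rule ccontr)
  assume "\<not> \<phi> t \<le> 0"
  hence pt: "\<phi> t > 0" by simp
  define S where "S = {0..t} \<inter> \<phi> -` {..0}"
  have "closed S" unfolding S_def
    by (rule continuous_closed_preimage) (auto intro: continuous_on_subset[OF cont])
  moreover have "0 \<in> S" using init t by (auto simp: S_def)
  moreover have "bdd_above S" unfolding S_def by (rule bdd_aboveI[of _ t]) auto
  ultimately have s0S: "Sup S \<in> S" using closed_contains_Sup by blast
  define s0 where "s0 = Sup S"
  have s0: "0 \<le> s0" "s0 \<le> t" "\<phi> s0 \<le> 0" using s0S by (auto simp: S_def s0_def)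
  have above: "\<phi> s > 0" if "s0 < s" "s \<le> t" for s
  proof (rule ccontr)
    assume "\<not> \<phi> s > 0"
    hence "s \<in> S" using that s0 by (auto simp: S_def)
    hence "s \<le> s0" unfolding s0_def using \<open>bdd_above S\<close> by (rule cSup_upper)
    thus False using that by simp
  qed
  obtain s1 where s1: "s1 \<in> {s0..t}" "\<phi> s1 = 0"
    using IVT'[of \<phi> s0 0 t] s0 pt continuous_on_subset[OF cont, of "{s0..t}"] by force
  have "s1 \<le> s0" using above[of s1] s1 by force
  hence "s1 = s0" using s1 by auto
  hence ps0: "\<phi> s0 = 0" using s1 by simp
  have hint: "h integrable_on {0..t}" using int[OF t] by blast
  have c: "integral {0..s0} h + integral {s0..t} h = integral {0..t} h"
    using Henstock_Kurzweil_Integration.integral_combine[OF s0(1,2) hint] .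
  have "integral {0..s0} h = \<phi> s0 - \<phi> 0" using int[of s0] s0 by (simp add: integral_unique)
  moreover have "integral {0..t} h = \<phi> t - \<phi> 0" using int[OF t] by (simp add: integral_unique)
  ultimately have eq: "integral {s0..t} h = \<phi> t" using c ps0 by simp
  have "integral {s0..t} h \<le> 0"
  proof -
    have "h integrable_on {s0..t}" using integrable_subinterval_real[OF hint] s0 by auto
    hence "(h has_integral integral {s0..t} h) {s0..t}" by (rule integrable_integral)
    hence neg: "((\<lambda>s. - h s) has_integral - integral {s0..t} h) {s0..t}" by (rule has_integral_neg)
    have nn: "\<And>s. s \<in> {s0..t} \<Longrightarrow> 0 \<le> - h s"
    proof -
      fix s assume "s \<in> {s0..t}"
      hence "\<phi> s \<ge> 0"
      proof (cases "s = s0")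
        case True then show ?thesis using ps0 by simp
      next
        case False then show ?thesis using above[of s] \<open>s \<in> {s0..t}\<close> by simp
      qed
      thus "0 \<le> - h s" using sign[of s] \<open>s \<in> {s0..t}\<close> s0 by auto
    qed
    have "0 \<le> - integral {s0..t} h" by (rule has_integral_nonneg[OF neg nn])
    thus ?thesis by simp
  qed
  thus False using eq pt by simp
qed



lemma exp_int:
  fixes L d T :: real
  assumes "L > 0" "T \<ge> 0"
  shows "((\<lambda>s. L * d * exp (2 * L * s)) has_integral (d/2 * (exp (2 * L * T) - 1))) {0..T}"
proof -
  have "((\<lambda>s. L * d * exp (2 * L * s)) has_integral ((\<lambda>s. d/2 * exp (2 * L * s)) T - (\<lambda>s. d/2 * exp (2 * L * s)) 0)) {0..T}"
  proof (rule fundamental_theorem_of_calculus[OF assms(2)])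
    fix s :: real assume "s \<in> {0..T}"
    have "((\<lambda>s. d/2 * exp (2 * L * s)) has_real_derivative (d/2 * (exp (2 * L * s) * (2 * L)))) (at s)"
      by (auto intro!: derivative_eq_intros)
    moreover have "d/2 * (exp (2 * L * s) * (2 * L)) = L * d * exp (2 * L * s)" using assms by (simp add: field_simps)
    ultimately have "((\<lambda>s. d/2 * exp (2 * L * s)) has_real_derivative (L * d * exp (2 * L * s))) (at s)" by (rule DERIV_cong)
    thus "((\<lambda>s. d/2 * exp (2 * L * s)) has_vector_derivative (L * d * exp (2 * L * s))) (at s within {0..T})"
      by (simp add: has_real_derivative_iff_has_vector_derivative has_vector_derivative_at_within)
  qed
  thus ?thesis by (simp add: algebra_simps)
qed

lemma picard_global:
  fixes G :: "real \<Rightarrow> 'b::euclidean_space \<Rightarrow> 'b" and x0 :: 'b and B L :: real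
  assumes Gc: "\<And>y. continuous_on UNIV y \<Longrightarrow> continuous_on UNIV (\<lambda>s. G s (y s))"
    and Gb: "\<And>s w. norm (G s w) \<le> B"
    and Gl: "\<And>s w w'. norm (G s w - G s w') \<le> L * norm (w - w')"
    and L: "L > 0"
  shows "\<exists>y. continuous_on UNIV y \<and> (\<forall>t\<ge>0. ((\<lambda>s. G s (y s)) has_integral (y t - x0)) {0..t})"
proof -
  have B0: "B \<ge> 0" using Gb[of 0 0] norm_ge_zero[of "G 0 0"] by linarith
  define Y where "Y = (\<lambda>(z::real \<Rightarrow>\<^sub>C 'b) s. exp (2 * L * max 0 s) *\<^sub>R apply_bcontfun z s)"
  define I where "I = (\<lambda>z t. integral {0..max 0 t} (\<lambda>s. G s (Y z s)))"
  define P where "P = (\<lambda>z t. exp (-(2 * L * max 0 t)) *\<^sub>R (x0 + I z t))"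
  have Ycont: "continuous_on UNIV (Y z)" for z
    unfolding Y_def by (auto intro!: continuous_intros)
  have hcont: "continuous_on UNIV (\<lambda>s. G s (Y z s))" for z by (rule Gc[OF Ycont])
  have hint: "(\<lambda>s. G s (Y z s)) integrable_on {a..b}" for z a b
    by (rule integrable_continuous_interval) (rule continuous_on_subset[OF hcont], simp)
  have Icont: "continuous_on UNIV (I z)" for z
  proof (rule cont_UNIV_local)
    fix n :: nat
    have c1: "continuous_on {0..real n} (\<lambda>x. integral {0..x} (\<lambda>s. G s (Y z s)))"
      by (rule indefinite_integral_continuous_1[OF hint])
    have c2: "continuous_on {-real n..real n} (\<lambda>t. max 0 t :: real)"
      by (auto intro!: continuous_intros)
    show "continuous_on {-real n..real n} (I z)"
      unfolding I_def by (rule continuous_on_compose2[OF c1 c2]) auto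
  qed
  have Ibound: "norm (I z t) \<le> B * max 0 t" for z t
  proof -
    have "norm (I z t) \<le> integral {0..max 0 t} (\<lambda>s. B)"
      unfolding I_def
      by (rule integral_norm_bound_integral[OF hint]) (auto intro: Gb)
    thus ?thesis by (simp add: mult.commute)
  qed
  have Pcont: "continuous_on UNIV (P z)" for z
    unfolding P_def by (auto intro!: continuous_intros Icont)
  have Pbound: "norm (P z t) \<le> norm x0 + B / (2 * L)" for z t
  proof -
    define T where "T = max 0 t"
    have T0: "T \<ge> 0" by (simp add: T_def)
    have e1: "exp (-(2 * L * T)) \<le> 1" using L T0 by simp
    have e2: "2 * L * T \<le> exp (2 * L * T)" using exp_ge_add_one_self[of "2 * L * T"] by linarith
    have e3: "T * exp (-(2 * L * T)) \<le> 1/(2 * L)"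
    proof (cases "T = 0")
      case True then show ?thesis using L by simp
    next
      case False
      hence Tp: "T > 0" using T0 by simp
      have "T * exp (-(2 * L * T)) = T / exp (2 * L * T)" by (simp add: exp_minus field_simps)
      also have "\<dots> \<le> T / (2 * L * T)"
        using Tp e2 L by (intro divide_left_mono) auto
      also have "\<dots> = 1 / (2 * L)" using Tp by simp
      finally show ?thesis .
    qed
    have "norm (P z t) = exp (-(2 * L * T)) * norm (x0 + I z t)" by (simp add: P_def T_def)
    also have "\<dots> \<le> exp (-(2 * L * T)) * (norm x0 + B * T)"
      using norm_triangle_ineq[of x0 "I z t"] Ibound[of z t] by (intro mult_left_mono) (auto simp: T_def)
    also have "\<dots> = exp (-(2 * L * T)) * norm x0 + B * (T * exp (-(2 * L * T)))" by (simp add: algebra_simps)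
    also have "\<dots> \<le> norm x0 + B * (1/(2 * L))"
      using e1 e3 B0 by (intro add_mono mult_left_mono) (auto intro: mult_left_le_one_le)
    finally show ?thesis by simp
  qed
  have Pbc: "P z \<in> bcontfun" for z by (rule bcontfun_normI[OF Pcont Pbound])
  define \<Phi> where "\<Phi> = (\<lambda>z. Bcontfun (P z))"
  have Phi_ap: "apply_bcontfun (\<Phi> z) = P z" for z unfolding \<Phi>_def using Pbc Bcontfun_inverse by blast
  have contr: "dist (\<Phi> z1) (\<Phi> z2) \<le> 1/2 * dist z1 z2" for z1 z2
  proof (rule dist_bound)
    fix t :: real
    define d where "d = dist z1 z2"
    define T where "T = max 0 t"
    have T0: "T \<ge> 0" unfolding T_def by (rule max.cobounded1)
    have "I z1 t - I z2 t = integral {0..T} (\<lambda>s. G s (Y z1 s) - G s (Y z2 s))"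
      unfolding I_def T_def by (rule integral_diff[symmetric, OF hint hint])
    hence "norm (I z1 t - I z2 t) \<le> integral {0..T} (\<lambda>s. L * d * exp (2 * L * s))"
    proof -
      assume eq: "I z1 t - I z2 t = integral {0..T} (\<lambda>s. G s (Y z1 s) - G s (Y z2 s))"
      have "norm (integral {0..T} (\<lambda>s. G s (Y z1 s) - G s (Y z2 s))) \<le> integral {0..T} (\<lambda>s. L * d * exp (2 * L * s))"
      proof (rule integral_norm_bound_integral)
        show "(\<lambda>s. G s (Y z1 s) - G s (Y z2 s)) integrable_on {0..T}" by (rule integrable_diff[OF hint hint])
        show "(\<lambda>s. L * d * exp (2 * L * s)) integrable_on {0..T}" using exp_int[OF L T0] by blast
        fix s assume s: "s \<in> {0..T}"
        have "norm (G s (Y z1 s) - G s (Y z2 s)) \<le> L * norm (Y z1 s - Y z2 s)" by (rule Gl)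
        also have "Y z1 s - Y z2 s = exp (2 * L * s) *\<^sub>R (apply_bcontfun z1 s - apply_bcontfun z2 s)"
          using s by (simp add: Y_def scaleR_diff_right)
        also have "L * norm (exp (2 * L * s) *\<^sub>R (apply_bcontfun z1 s - apply_bcontfun z2 s))
            = L * exp (2 * L * s) * dist (apply_bcontfun z1 s) (apply_bcontfun z2 s)" by (simp add: dist_norm)
        also have "\<dots> \<le> L * exp (2 * L * s) * d"
          unfolding d_def using L by (intro mult_left_mono dist_bounded) auto
        finally show "norm (G s (Y z1 s) - G s (Y z2 s)) \<le> L * d * exp (2 * L * s)" by (simp add: algebra_simps)
      qed
      thus ?thesis using eq by simp
    qed
    also have "\<dots> = d/2 * (exp (2 * L * T) - 1)" using exp_int[OF L T0] by (rule integral_unique)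
    finally have nI: "norm (I z1 t - I z2 t) \<le> d/2 * (exp (2 * L * T) - 1)" .
    have "dist (apply_bcontfun (\<Phi> z1) t) (apply_bcontfun (\<Phi> z2) t) = exp (-(2 * L * T)) * norm (I z1 t - I z2 t)"
      by (simp add: Phi_ap P_def dist_norm T_def scaleR_diff_right[symmetric])
    also have "\<dots> \<le> exp (-(2 * L * T)) * (d/2 * (exp (2 * L * T) - 1))"
      by (rule mult_left_mono[OF nI]) simp
    also have "\<dots> = d/2 * (1 - exp (-(2 * L * T)))" by (simp add: algebra_simps exp_minus field_simps)
    also have "\<dots> \<le> d/2"
    proof -
      have "0 \<le> d" by (simp add: d_def)
      moreover have "1 - exp (-(2 * L * T)) \<le> 1" by simp
      ultimately show ?thesis by (simp add: mult_left_le)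
    qed
    finally show "dist (apply_bcontfun (\<Phi> z1) t) (apply_bcontfun (\<Phi> z2) t) \<le> 1/2 * dist z1 z2" by (simp add: d_def)
  qed
  obtain z where fx: "\<Phi> z = z" using banach_fix_type[of "1/2" \<Phi>] contr by auto
  define y where "y = Y z"
  have "continuous_on UNIV y" unfolding y_def by (rule Ycont)
  moreover have "((\<lambda>s. G s (y s)) has_integral (y t - x0)) {0..t}" if t: "t \<ge> 0" for t
  proof -
    have "apply_bcontfun z t = P z t" using fx Phi_ap by metis
    hence "exp (2 * L * t) *\<^sub>R apply_bcontfun z t = x0 + I z t"
      using t by (simp add: P_def exp_minus)
    hence "y t - x0 = integral {0..t} (\<lambda>s. G s (y s))"
      using t by (simp add: y_def Y_def I_def)
    thus ?thesis using hint[of z 0 t] by (simp add: y_def has_integral_integral)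
  qed
  ultimately show ?thesis by blast
qed



lemma q_lip_a:
  fixes a a' w :: real
  assumes "0 \<le> a" "0 \<le> a'" "0 < w"
  shows "\<bar>a * (a / (a + w)) - a' * (a' / (a' + w))\<bar> \<le> \<bar>a - a'\<bar>"
proof -
  have d1: "a + w > 0" "a' + w > 0" using assms by auto
  have eq: "a * (a / (a + w)) - a' * (a' / (a' + w)) = (a - a') * ((a * a' + w * (a + a')) / ((a + w) * (a' + w)))"
    using d1 by (simp add: field_simps)
  have f0: "0 \<le> (a * a' + w * (a + a')) / ((a + w) * (a' + w))" using assms d1 by simp
  have f1: "(a * a' + w * (a + a')) / ((a + w) * (a' + w)) \<le> 1"
  proof -
    have "a * a' + w * (a + a') \<le> (a + w) * (a' + w)" using assms by (simp add: algebra_simps)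
    thus ?thesis using d1 by (simp add: divide_le_eq_1)
  qed
  have "\<bar>(a - a') * ((a * a' + w * (a + a')) / ((a + w) * (a' + w)))\<bar>
      = \<bar>a - a'\<bar> * ((a * a' + w * (a + a')) / ((a + w) * (a' + w)))" by (simp only: abs_mult abs_of_nonneg[OF f0])
  also have "\<dots> \<le> \<bar>a - a'\<bar> * 1" using f1 by (intro mult_left_mono) auto
  finally show ?thesis using eq by simp
qed

lemma q_lip_w:
  fixes a w w' :: real
  assumes "0 \<le> a" "0 < w" "0 < w'"
  shows "\<bar>a * (a / (a + w)) - a * (a / (a + w'))\<bar> \<le> \<bar>w - w'\<bar>"
proof -
  have d1: "a + w > 0" "a + w' > 0" using assms by auto
  have eq: "a * (a / (a + w)) - a * (a / (a + w')) = (w' - w) * ((a * a) / ((a + w) * (a + w')))"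
    using d1 by (simp add: field_simps)
  have f0: "0 \<le> (a * a) / ((a + w) * (a + w'))" using assms d1 by simp
  have f1: "(a * a) / ((a + w) * (a + w')) \<le> 1"
  proof -
    have "a * a \<le> (a + w) * (a + w')" using assms by (simp add: algebra_simps)
    thus ?thesis using d1 by (simp add: divide_le_eq_1)
  qed
  have "\<bar>(w' - w) * ((a * a) / ((a + w) * (a + w')))\<bar> = \<bar>w - w'\<bar> * ((a * a) / ((a + w) * (a + w')))"
    by (simp only: abs_mult abs_of_nonneg[OF f0] abs_minus_commute[of w' w])
  also have "\<dots> \<le> \<bar>w - w'\<bar> * 1" using f1 by (intro mult_left_mono) auto
  finally show ?thesis using eq by simp
qed

lemma q_lip:
  fixes a a' w w' :: real
  assumes "0 \<le> a" "0 \<le> a'" "0 < w" "0 < w'"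
  shows "\<bar>a * (a / (a + w)) - a' * (a' / (a' + w'))\<bar> \<le> \<bar>a - a'\<bar> + \<bar>w - w'\<bar>"
  using q_lip_a[of a a' w] q_lip_w[of a' w w'] assms by linarith

lemma prod_lip:
  fixes a a' b b' R :: real
  assumes "0 \<le> a" "a \<le> R" "0 \<le> b'" "b' \<le> R"
  shows "\<bar>a * b - a' * b'\<bar> \<le> R * \<bar>a - a'\<bar> + R * \<bar>b - b'\<bar>"
proof -
  have "a * b - a' * b' = a * (b - b') + b' * (a - a')" by (simp add: algebra_simps)
  hence "\<bar>a * b - a' * b'\<bar> \<le> \<bar>a\<bar> * \<bar>b - b'\<bar> + \<bar>b'\<bar> * \<bar>a - a'\<bar>"
    by (simp add: abs_mult[symmetric] abs_triangle_ineq)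
  also have "\<dots> \<le> R * \<bar>b - b'\<bar> + R * \<bar>a - a'\<bar>"
    using assms by (intro add_mono mult_right_mono) auto
  finally show ?thesis by simp
qed

lemma clamp_lip:
  fixes a b v v' :: real
  assumes "a \<le> b"
  shows "\<bar>min b (max a v) - min b (max a v')\<bar> \<le> \<bar>v - v'\<bar>"
  using assms by (auto simp: min_def max_def abs_if)

lemma norm4_le:
  fixes a b c d :: real
  shows "norm (a, b, c, d) \<le> \<bar>a\<bar> + \<bar>b\<bar> + \<bar>c\<bar> + \<bar>d\<bar>"
proof -
  have "norm (a, b, c, d) \<le> norm a + norm (b, c, d)" by (rule norm_Pair_le)
  also have "norm (b, c, d) \<le> norm b + norm (c, d)" by (rule norm_Pair_le)
  also have "norm (c, d) \<le> norm c + norm d" by (rule norm_Pair_le)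
  finally show ?thesis by simp
qed

lemma comp_le_norm:
  fixes w :: "real \<times> real \<times> real \<times> real"
  shows "\<bar>fst w\<bar> \<le> norm w" "\<bar>fst (snd w)\<bar> \<le> norm w"
    "\<bar>fst (snd (snd w))\<bar> \<le> norm w" "\<bar>snd (snd (snd w))\<bar> \<le> norm w"
proof -
  obtain a b c d where w: "w = (a, b, c, d)" by (cases w) auto
  have n1: "norm (b, c, d) \<le> norm w" unfolding w by (rule norm_snd_le)
  have n2: "norm (c, d) \<le> norm (b, c, d)" by (rule norm_snd_le)
  show "\<bar>fst w\<bar> \<le> norm w" unfolding w using norm_fst_le[of a "(b,c,d)"] by simp
  show "\<bar>fst (snd w)\<bar> \<le> norm w" using norm_fst_le[of b "(c,d)"] n1 by (simp add: w)
  show "\<bar>fst (snd (snd w))\<bar> \<le> norm w" using norm_fst_le[of c d] n1 n2 by (simp add: w)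
  show "\<bar>snd (snd (snd w))\<bar> \<le> norm w" using norm_snd_le[of d c] n1 n2 by (simp add: w)
qed

lemma comp_int:
  fixes f :: "real \<Rightarrow> real \<times> real \<times> real \<times> real"
  assumes "(f has_integral i) S"
  shows "((\<lambda>s. fst (f s)) has_integral fst i) S"
    "((\<lambda>s. fst (snd (f s))) has_integral fst (snd i)) S"
    "((\<lambda>s. fst (snd (snd (f s)))) has_integral fst (snd (snd i))) S"
    "((\<lambda>s. snd (snd (snd (f s)))) has_integral snd (snd (snd i))) S"
proof -
  have bl2: "bounded_linear (\<lambda>p::real \<times> real \<times> real \<times> real. fst (snd p))"
    by (intro bounded_linear_compose[OF bounded_linear_fst bounded_linear_snd])
  have bl3: "bounded_linear (\<lambda>p::real \<times> real \<times> real \<times> real. fst (snd (snd p)))"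
    by (intro bounded_linear_compose[OF bounded_linear_fst] bounded_linear_compose[OF bounded_linear_snd] bounded_linear_snd)
  have bl4: "bounded_linear (\<lambda>p::real \<times> real \<times> real \<times> real. snd (snd (snd p)))"
    by (intro bounded_linear_compose[OF bounded_linear_snd] bounded_linear_compose[OF bounded_linear_snd] bounded_linear_snd)
  show "((\<lambda>s. fst (f s)) has_integral fst i) S"
    using has_integral_linear[OF assms bounded_linear_fst] by (simp add: o_def)
  show "((\<lambda>s. fst (snd (f s))) has_integral fst (snd i)) S"
    using has_integral_linear[OF assms bl2] by (simp add: o_def)
  show "((\<lambda>s. fst (snd (snd (f s)))) has_integral fst (snd (snd i))) S"
    using has_integral_linear[OF assms bl3] by (simp add: o_def)
  show "((\<lambda>s. snd (snd (snd (f s)))) has_integral snd (snd (snd i))) S"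
    using has_integral_linear[OF assms bl4] by (simp add: o_def)
qed



lemma V_arith:
  fixes aW nu mu k muW us l a b v c Ls As :: real
  assumes pos: "aW > 0" "nu > 0" "mu > 0" "k > 0" "muW > 0" "us > 0"
    and nn: "0 \<le> l" "0 \<le> a" "0 \<le> b" "v \<le> us"
    and c: "c = 2 * aW / muW"
    and Ls: "Ls = (c * nu + us) / (mu * k) + 1"
    and As: "As = (c * nu * Ls + us) / aW"
    and big: "a + c * b \<ge> Ls + c * As"
  shows "aW * b - nu * a - mu * (1 + k * (l + a)) * a + v + c * (nu * a - muW * b) \<le> 0"
proof -
  have cmu: "c * muW = 2 * aW" using c pos by simp
  have c0: "c > 0" using c pos by simp
  have mk: "mu * k > 0" using pos by simp
  have "aW * b - nu * a - mu * (1 + k * (l + a)) * a + v + c * (nu * a - muW * b)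
      = - aW * b + c * nu * a - nu * a - mu * a - (mu * k) * l * a - (mu * k) * (a * a) + v"
    using cmu by (simp add: algebra_simps)
  also have "\<dots> \<le> - aW * b + c * nu * a - (mu * k) * (a * a) + us"
  proof -
    have "0 \<le> nu * a" "0 \<le> mu * a" "0 \<le> (mu * k) * l * a" using pos nn by auto
    thus ?thesis using nn by linarith
  qed
  also have "\<dots> \<le> 0"
  proof (cases "a \<ge> Ls")
    case True
    have Ls1: "Ls \<ge> 1" using Ls pos c0 by simp
    have mkLs0: "mu * k * Ls = mu * k * ((c * nu + us) / (mu * k)) + mu * k" by (simp add: Ls distrib_left)
    have "mu * k * ((c * nu + us) / (mu * k)) = c * nu + us" using pos by simp
    hence mkLs: "mu * k * Ls = c * nu + us + mu * k" using mkLs0 by simp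
    have "(mu * k) * (a * a) \<ge> (mu * k) * (Ls * a)"
      using True nn mk by (intro mult_left_mono mult_right_mono) auto
    also have "(mu * k) * (Ls * a) = (c * nu + us + mu * k) * a" unfolding mkLs[symmetric] by (simp only: mult.assoc)
    also have "\<dots> \<ge> c * nu * a + us"
    proof -
      have "us * a \<ge> us" using True Ls1 pos by simp
      moreover have "mu * k * a \<ge> 0" using mk nn by simp
      ultimately show ?thesis by (simp add: algebra_simps)
    qed
    finally have "(mu * k) * (a * a) \<ge> c * nu * a + us" .
    moreover have "aW * b \<ge> 0" using pos nn by simp
    ultimately show ?thesis by linarith
  next
    case False
    hence aL: "a < Ls" by simp
    have "c * b > c * As" using big aL by linarith
    hence bA: "b > As" using c0 by simp
    have "aW * b > aW * As" using bA pos by simp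
    also have "aW * As = c * nu * Ls + us" using As pos by simp
    finally have i1: "aW * b > c * nu * Ls + us" .
    have i2: "c * nu * a \<le> c * nu * Ls" using aL c0 pos by simp
    have i3: "(mu * k) * (a * a) \<ge> 0" using mk by simp
    show ?thesis using i1 i2 i3 by linarith
  qed
  finally show ?thesis .
qed

lemma boxW_ineq:
  fixes aW nu mu k muW us l b c M Lm Am :: real
  assumes pos: "aW > 0" "nu > 0" "mu > 0" "k > 0" "muW > 0" "us > 0" "c > 0" "M \<ge> 0"
    and Lm: "Lm = max (max M 1) ((aW * M / c + aW * nu / muW + us) / (mu * k))"
    and Am: "Am = max (M / c) (nu * Lm / muW)"
    and nn: "0 \<le> l" "b \<le> Am"
  shows "aW * b - nu * Lm - mu * (1 + k * (l + Lm)) * Lm + us \<le> 0"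
proof -
  have mk: "mu * k > 0" using pos by simp
  have Lm1: "Lm \<ge> 1" using Lm by simp
  have Lmq: "Lm \<ge> (aW * M / c + aW * nu / muW + us) / (mu * k)" using Lm by simp
  hence Lmq': "mu * k * Lm \<ge> aW * M / c + aW * nu / muW + us" using mk by (simp add: field_simps)
  have Amle: "Am \<le> M / c + nu * Lm / muW" using Am pos Lm1 by auto
  have "aW * b \<le> aW * Am" using nn pos by simp
  also have "\<dots> \<le> aW * (M / c + nu * Lm / muW)" using Amle pos by simp
  finally have b1: "aW * b \<le> aW * M / c + (aW * nu / muW) * Lm" by (simp add: algebra_simps)
  have "mu * k * Lm * Lm \<ge> (aW * M / c + aW * nu / muW + us) * Lm"
    using Lmq' Lm1 by (intro mult_right_mono) auto
  moreover have "(aW * M / c + aW * nu / muW + us) * Lm \<ge> aW * M / c + (aW * nu / muW) * Lm + us"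
  proof -
    have "(aW * M / c + us) * Lm \<ge> (aW * M / c + us) * 1"
      using Lm1 pos by (intro mult_left_mono) auto
    thus ?thesis by (simp add: algebra_simps)
  qed
  ultimately have q: "mu * k * Lm * Lm \<ge> aW * M / c + (aW * nu / muW) * Lm + us" by linarith
  have "aW * b - nu * Lm - mu * (1 + k * (l + Lm)) * Lm + us
      = aW * b - nu * Lm - mu * Lm - mu * k * l * Lm - mu * k * Lm * Lm + us" by (simp add: algebra_simps)
  moreover have "nu * Lm \<ge> 0" "mu * Lm \<ge> 0" "mu * k * l * Lm \<ge> 0" using pos nn Lm1 by auto
  ultimately show ?thesis using b1 q by linarith
qed



definition cl :: "real \<Rightarrow> real \<Rightarrow> real \<Rightarrow> real" where "cl a b v = min b (max a v)"

lemma cl_le: "cl a b v \<le> b" by (simp add: cl_def)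
lemma cl_ge: "a \<le> b \<Longrightarrow> a \<le> cl a b v" by (simp add: cl_def)
lemma cl_id: "a \<le> v \<Longrightarrow> v \<le> b \<Longrightarrow> cl a b v = v" by (simp add: cl_def)
lemma cl_low: "v \<le> a \<Longrightarrow> a \<le> b \<Longrightarrow> cl a b v = a" by (simp add: cl_def)
lemma cl_high: "b \<le> v \<Longrightarrow> a \<le> b \<Longrightarrow> cl a b v = b" by (simp add: cl_def)

lemma cl_lip: "a \<le> b \<Longrightarrow> \<bar>cl a b v - cl a b v'\<bar> \<le> \<bar>v - v'\<bar>"
  unfolding cl_def by (rule clamp_lip)

lemma q_mono:
  fixes a a' w w' :: real
  assumes "0 \<le> a" "a \<le> a'" "0 < w'" "w' \<le> w"
  shows "a * (a / (a + w)) \<le> a' * (a' / (a' + w'))"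
proof -
  have p: "a + w > 0" "a' + w' > 0" using assms by auto
  have "a / (a + w) \<le> a' / (a' + w')"
  proof -
    have "a * (a' + w') \<le> a' * (a + w)"
    proof -
      have "a * w' \<le> a' * w" using assms by (intro mult_mono) auto
      thus ?thesis by (simp add: algebra_simps)
    qed
    thus ?thesis using p by (simp add: divide_le_eq le_divide_eq mult.commute)
  qed
  moreover have "0 \<le> a / (a + w)" using assms p by simp
  ultimately show ?thesis using assms by (intro mult_mono) auto
qed

lemma q_bound:
  fixes a w R :: real
  assumes "0 \<le> a" "a \<le> R" "0 < w"
  shows "0 \<le> a * (a / (a + w))" "a * (a / (a + w)) \<le> R"
proof -
  have p: "a + w > 0" using assms by auto
  have f1: "a / (a + w) \<le> 1" using assms p by simp
  have f0: "0 \<le> a / (a + w)" using assms p by simp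
  show "0 \<le> a * (a / (a + w))" using assms f0 by simp
  have "a * (a / (a + w)) \<le> a * 1" using assms f1 by (intro mult_left_mono) auto
  thus "a * (a / (a + w)) \<le> R" using assms by simp
qed


definition F4 :: "real \<Rightarrow> real \<Rightarrow> real \<Rightarrow> real \<Rightarrow> real \<Rightarrow> real \<Rightarrow> real \<Rightarrow> real \<Rightarrow> real \<Rightarrow> real \<Rightarrow> real \<Rightarrow> real \<Rightarrow> state" where
  "F4 aU aW nu mu k muU muW us c1 c2 c3 c4 =
    (aU * (c2 * (c2 / (c2 + c4))) - nu * c1 - mu * (1 + k * (c1 + c3)) * c1,
     nu * c1 - muU * c2,
     aW * c4 - nu * c3 - mu * (1 + k * (c1 + c3)) * c3 + us,
     nu * c3 - muW * c4)"

lemma abs3: "0 \<le> (A::real) \<Longrightarrow> A \<le> A' \<Longrightarrow> 0 \<le> B \<Longrightarrow> B \<le> B' \<Longrightarrow> 0 \<le> C \<Longrightarrow> C \<le> C' \<Longrightarrow> \<bar>A - B - C\<bar> \<le> A' + B' + C'"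
  by linarith

lemma prod_bd: "0 \<le> (a::real) \<Longrightarrow> a \<le> R \<Longrightarrow> 0 \<le> b \<Longrightarrow> b \<le> S \<Longrightarrow> 0 \<le> a * b \<and> a * b \<le> R * S"
  by (simp add: mult_mono)

lemma F4_bound:
  fixes aU aW nu mu k muU muW us R c1 c2 c3 c4 :: real
  assumes pos: "aU > 0" "aW > 0" "nu > 0" "mu > 0" "k > 0" "muU > 0" "muW > 0" "us > 0"
    and c: "0 \<le> c1" "c1 \<le> R" "0 \<le> c2" "c2 \<le> R" "0 \<le> c3" "c3 \<le> R" "0 < c4" "c4 \<le> R"
  shows "norm (F4 aU aW nu mu k muU muW us c1 c2 c3 c4) \<le>
     (aU * R + nu * R + mu * (1 + k * (2 * R)) * R) + (nu * R + muU * R) +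
     (aW * R + nu * R + mu * (1 + k * (2 * R)) * R + us) + (nu * R + muW * R)"
proof -
  have R0: "R \<ge> 0" using c by linarith
  have q: "0 \<le> c2 * (c2 / (c2 + c4))" "c2 * (c2 / (c2 + c4)) \<le> R" using q_bound[OF c(3,4,7)] by auto
  have m1: "0 \<le> mu * (1 + k * (c1 + c3))" "mu * (1 + k * (c1 + c3)) \<le> mu * (1 + k * (2 * R))"
    using pos c by (auto intro!: mult_left_mono)
  have a1: "0 \<le> aU * (c2 * (c2 / (c2 + c4)))" "aU * (c2 * (c2 / (c2 + c4))) \<le> aU * R"
    by (rule mult_nonneg_nonneg[OF _ q(1)], use pos in simp) (rule mult_left_mono[OF q(2)], use pos in simp)
  have n1: "0 \<le> nu * c1" "nu * c1 \<le> nu * R" using pos c by (auto intro: mult_left_mono)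
  have p1: "0 \<le> mu * (1 + k * (c1 + c3)) * c1 \<and> mu * (1 + k * (c1 + c3)) * c1 \<le> mu * (1 + k * (2 * R)) * R"
    by (rule prod_bd) (use m1 c in auto)
  have t1: "\<bar>aU * (c2 * (c2 / (c2 + c4))) - nu * c1 - mu * (1 + k * (c1 + c3)) * c1\<bar> \<le> aU * R + nu * R + mu * (1 + k * (2 * R)) * R"
    using a1 n1 p1 by (intro abs3) auto
  have t3: "\<bar>aW * c4 - nu * c3 - mu * (1 + k * (c1 + c3)) * c3 + us\<bar> \<le> aW * R + nu * R + mu * (1 + k * (2 * R)) * R + us"
  proof -
    have a3: "0 \<le> aW * c4" "aW * c4 \<le> aW * R" using pos c by (auto intro: mult_left_mono)
    have n3: "0 \<le> nu * c3" "nu * c3 \<le> nu * R" using pos c by (auto intro: mult_left_mono)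
    have p3: "0 \<le> mu * (1 + k * (c1 + c3)) * c3 \<and> mu * (1 + k * (c1 + c3)) * c3 \<le> mu * (1 + k * (2 * R)) * R"
      by (rule prod_bd) (use m1 c in auto)
    have "\<bar>aW * c4 - nu * c3 - mu * (1 + k * (c1 + c3)) * c3\<bar> \<le> aW * R + nu * R + mu * (1 + k * (2 * R)) * R"
      using a3 n3 p3 by (intro abs3) auto
    thus ?thesis using pos by linarith
  qed
  have t2: "\<bar>nu * c1 - muU * c2\<bar> \<le> nu * R + muU * R"
  proof -
    have "0 \<le> nu * c1" "nu * c1 \<le> nu * R" "0 \<le> muU * c2" "muU * c2 \<le> muU * R" using pos c by (auto intro: mult_left_mono)
    thus ?thesis by linarith
  qed
  have t4: "\<bar>nu * c3 - muW * c4\<bar> \<le> nu * R + muW * R"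
  proof -
    have "0 \<le> nu * c3" "nu * c3 \<le> nu * R" "0 \<le> muW * c4" "muW * c4 \<le> muW * R" using pos c by (auto intro: mult_left_mono)
    thus ?thesis by linarith
  qed
  show ?thesis unfolding F4_def using norm4_le t1 t2 t3 t4
    by (smt (verit))
qed

lemma F4_lip:
  fixes aU aW nu mu k muU muW us R N c1 c2 c3 c4 c1' c2' c3' c4' :: real
  assumes pos: "aU > 0" "aW > 0" "nu > 0" "mu > 0" "k > 0" "muU > 0" "muW > 0" "us > 0"
    and c: "0 \<le> c1" "c1 \<le> R" "0 \<le> c2" "c2 \<le> R" "0 \<le> c3" "c3 \<le> R" "0 < c4" "c4 \<le> R"
    and c': "0 \<le> c1'" "c1' \<le> R" "0 \<le> c2'" "c2' \<le> R" "0 \<le> c3'" "c3' \<le> R" "0 < c4'" "c4' \<le> R"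
    and d: "\<bar>c1 - c1'\<bar> \<le> N" "\<bar>c2 - c2'\<bar> \<le> N" "\<bar>c3 - c3'\<bar> \<le> N" "\<bar>c4 - c4'\<bar> \<le> N"
  shows "norm (F4 aU aW nu mu k muU muW us c1 c2 c3 c4 - F4 aU aW nu mu k muU muW us c1' c2' c3' c4') \<le>
     ((2 * aU + nu + mu + 6 * mu * k * R) + (nu + muU) + (aW + nu + mu + 6 * mu * k * R) + (nu + muW)) * N"
proof -
  have R0: "R \<ge> 0" using c by linarith
  have mk: "mu * k > 0" using pos by simp
  have q: "\<bar>c2 * (c2 / (c2 + c4)) - c2' * (c2' / (c2' + c4'))\<bar> \<le> \<bar>c2 - c2'\<bar> + \<bar>c4 - c4'\<bar>"
    by (rule q_lip) (use c c' in auto)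
  have P1: "\<bar>(c1 + c3) * c1 - (c1' + c3') * c1'\<bar> \<le> (2 * R) * \<bar>(c1 + c3) - (c1' + c3')\<bar> + (2 * R) * \<bar>c1 - c1'\<bar>"
    by (rule prod_lip) (use c c' in auto)
  have P3: "\<bar>(c1 + c3) * c3 - (c1' + c3') * c3'\<bar> \<le> (2 * R) * \<bar>(c1 + c3) - (c1' + c3')\<bar> + (2 * R) * \<bar>c3 - c3'\<bar>"
    by (rule prod_lip) (use c c' in auto)
  have s13: "\<bar>(c1 + c3) - (c1' + c3')\<bar> \<le> 2 * N" using d by linarith
  have P1': "\<bar>(c1 + c3) * c1 - (c1' + c3') * c1'\<bar> \<le> 6 * R * N"
  proof -
    have "(2 * R) * \<bar>(c1 + c3) - (c1' + c3')\<bar> \<le> (2 * R) * (2 * N)" using s13 R0 by (intro mult_left_mono) auto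
    moreover have "(2 * R) * \<bar>c1 - c1'\<bar> \<le> (2 * R) * N" using d R0 by (intro mult_left_mono) auto
    ultimately show ?thesis using P1 by (simp add: algebra_simps)
  qed
  have P3': "\<bar>(c1 + c3) * c3 - (c1' + c3') * c3'\<bar> \<le> 6 * R * N"
  proof -
    have "(2 * R) * \<bar>(c1 + c3) - (c1' + c3')\<bar> \<le> (2 * R) * (2 * N)" using s13 R0 by (intro mult_left_mono) auto
    moreover have "(2 * R) * \<bar>c3 - c3'\<bar> \<le> (2 * R) * N" using d R0 by (intro mult_left_mono) auto
    ultimately show ?thesis using P3 by (simp add: algebra_simps)
  qed
  define Q where "Q = c2 * (c2 / (c2 + c4)) - c2' * (c2' / (c2' + c4'))"
  define D1 where "D1 = (c1 + c3) * c1 - (c1' + c3') * c1'"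
  define D3 where "D3 = (c1 + c3) * c3 - (c1' + c3') * c3'"
  have e1: "(aU * (c2 * (c2 / (c2 + c4))) - nu * c1 - mu * (1 + k * (c1 + c3)) * c1) -
            (aU * (c2' * (c2' / (c2' + c4'))) - nu * c1' - mu * (1 + k * (c1' + c3')) * c1')
          = aU * Q - (nu + mu) * (c1 - c1') - (mu * k) * D1"
    by (simp add: Q_def D1_def algebra_simps)
  have e3: "(aW * c4 - nu * c3 - mu * (1 + k * (c1 + c3)) * c3 + us) -
            (aW * c4' - nu * c3' - mu * (1 + k * (c1' + c3')) * c3' + us)
          = aW * (c4 - c4') - (nu + mu) * (c3 - c3') - (mu * k) * D3"
    by (simp add: D3_def algebra_simps)
  have b1: "\<bar>aU * Q - (nu + mu) * (c1 - c1') - (mu * k) * D1\<bar> \<le> (2 * aU + nu + mu + 6 * mu * k * R) * N"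
  proof -
    have "\<bar>aU * Q\<bar> \<le> aU * (2 * N)" using q d pos unfolding Q_def by (simp add: abs_mult)
    moreover have "\<bar>(nu + mu) * (c1 - c1')\<bar> \<le> (nu + mu) * N" using d pos by (simp add: abs_mult)
    moreover have "\<bar>(mu * k) * D1\<bar> \<le> (mu * k) * (6 * R * N)"
    proof -
      have "\<bar>(mu * k) * D1\<bar> = (mu * k) * \<bar>D1\<bar>" using pos by (simp add: abs_mult abs_of_pos[OF pos(4)] abs_of_pos[OF pos(5)])
      also have "\<dots> \<le> (mu * k) * (6 * R * N)" using P1' mk unfolding D1_def by (intro mult_left_mono) auto
      finally show ?thesis .
    qed
    ultimately show ?thesis by (simp add: algebra_simps)
  qed
  have b3: "\<bar>aW * (c4 - c4') - (nu + mu) * (c3 - c3') - (mu * k) * D3\<bar> \<le> (aW + nu + mu + 6 * mu * k * R) * N"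
  proof -
    have "\<bar>aW * (c4 - c4')\<bar> \<le> aW * N" using d pos by (simp add: abs_mult)
    moreover have "\<bar>(nu + mu) * (c3 - c3')\<bar> \<le> (nu + mu) * N" using d pos by (simp add: abs_mult)
    moreover have "\<bar>(mu * k) * D3\<bar> \<le> (mu * k) * (6 * R * N)"
    proof -
      have "\<bar>(mu * k) * D3\<bar> = (mu * k) * \<bar>D3\<bar>" using pos by (simp add: abs_mult abs_of_pos[OF pos(4)] abs_of_pos[OF pos(5)])
      also have "\<dots> \<le> (mu * k) * (6 * R * N)" using P3' mk unfolding D3_def by (intro mult_left_mono) auto
      finally show ?thesis .
    qed
    ultimately show ?thesis by (simp add: algebra_simps)
  qed
  have b2: "\<bar>(nu * c1 - muU * c2) - (nu * c1' - muU * c2')\<bar> \<le> (nu + muU) * N"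
  proof -
    have "(nu * c1 - muU * c2) - (nu * c1' - muU * c2') = nu * (c1 - c1') - muU * (c2 - c2')" by (simp add: algebra_simps)
    moreover have "\<bar>nu * (c1 - c1')\<bar> \<le> nu * N" "\<bar>muU * (c2 - c2')\<bar> \<le> muU * N" using d pos by (auto simp: abs_mult)
    ultimately show ?thesis by (simp add: algebra_simps)
  qed
  have b4: "\<bar>(nu * c3 - muW * c4) - (nu * c3' - muW * c4')\<bar> \<le> (nu + muW) * N"
  proof -
    have "(nu * c3 - muW * c4) - (nu * c3' - muW * c4') = nu * (c3 - c3') - muW * (c4 - c4')" by (simp add: algebra_simps)
    moreover have "\<bar>nu * (c3 - c3')\<bar> \<le> nu * N" "\<bar>muW * (c4 - c4')\<bar> \<le> muW * N" using d pos by (auto simp: abs_mult)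
    ultimately show ?thesis by (simp add: algebra_simps)
  qed
  have "F4 aU aW nu mu k muU muW us c1 c2 c3 c4 - F4 aU aW nu mu k muU muW us c1' c2' c3' c4' =
    (aU * Q - (nu + mu) * (c1 - c1') - (mu * k) * D1, (nu * c1 - muU * c2) - (nu * c1' - muU * c2'),
     aW * (c4 - c4') - (nu + mu) * (c3 - c3') - (mu * k) * D3, (nu * c3 - muW * c4) - (nu * c3' - muW * c4'))"
    unfolding F4_def using e1 e3 by simp
  hence "norm (F4 aU aW nu mu k muU muW us c1 c2 c3 c4 - F4 aU aW nu mu k muU muW us c1' c2' c3' c4') \<le>
     \<bar>aU * Q - (nu + mu) * (c1 - c1') - (mu * k) * D1\<bar> + \<bar>(nu * c1 - muU * c2) - (nu * c1' - muU * c2')\<bar> +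
     \<bar>aW * (c4 - c4') - (nu + mu) * (c3 - c3') - (mu * k) * D3\<bar> + \<bar>(nu * c3 - muW * c4) - (nu * c3' - muW * c4')\<bar>"
    using norm4_le by metis
  also have "\<dots> \<le> (2 * aU + nu + mu + 6 * mu * k * R) * N + (nu + muU) * N + (aW + nu + mu + 6 * mu * k * R) * N + (nu + muW) * N"
    using b1 b2 b3 b4 by linarith
  finally show ?thesis by (simp add: algebra_simps)
qed

lemma cmp_gen:
  fixes a b ha hb :: "real \<Rightarrow> real"
  assumes ca: "continuous_on {0..} a" and cb: "continuous_on {0..} b"
    and ia: "\<And>t. t \<ge> 0 \<Longrightarrow> (ha has_integral (a t - a 0)) {0..t}"
    and ib: "\<And>t. t \<ge> 0 \<Longrightarrow> (hb has_integral (b t - b 0)) {0..t}"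
    and init: "a 0 \<le> b 0"
    and sign: "\<And>s. s \<ge> 0 \<Longrightarrow> a s \<ge> b s \<Longrightarrow> ha s \<le> hb s"
    and t: "t \<ge> 0"
  shows "a t \<le> b t"
proof -
  have "(\<lambda>t. a t - b t) t \<le> 0"
  proof (rule cmp1[of "\<lambda>t. a t - b t" "\<lambda>s. ha s - hb s"])
    show "continuous_on {0..} (\<lambda>t. a t - b t)" by (intro continuous_intros ca cb)
    show "((\<lambda>s. ha s - hb s) has_integral (a t - b t) - (a 0 - b 0)) {0..t}" if "t \<ge> 0" for t
      using has_integral_diff[OF ia[OF that] ib[OF that]] by (simp add: algebra_simps)
    show "a 0 - b 0 \<le> 0" using init by simp
    show "ha s - hb s \<le> 0" if "s \<ge> 0" "a s - b s \<ge> 0" for s using sign[of s] that by simp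
  qed (rule t)
  thus ?thesis by simp
qed



context
  fixes aU aW nu mu k muU muW us LUb AUb LWb AWb :: real
    and x0 :: state and u :: "real \<Rightarrow> real" and x :: "real \<Rightarrow> state"
  assumes pos: "aU > 0" "aW > 0" "nu > 0" "mu > 0" "k > 0" "muU > 0" "muW > 0" "us > 0"
      "LUb > 0" "AUb > 0" "LWb > 0" "AWb > 0"
    and uadm: "\<And>t. t \<ge> 0 \<Longrightarrow> 0 \<le> u t \<and> u t \<le> us"
    and sol: "is_solution (fdyn aU aW nu mu k muU muW) u x0 x"
    and inD: "\<And>t. t \<ge> 0 \<Longrightarrow> (x t, u t) \<in> desirable us LUb AUb LWb AWb"
begin

definition "x1 t = fst (x t)"
definition "x2 t = fst (snd (x t))"
definition "x3 t = fst (snd (snd (x t)))"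
definition "x4 t = snd (snd (snd (x t)))"
definition "hx s = fdyn aU aW nu mu k muU muW (x s) (u s)"

lemma x_eq: "x t = (x1 t, x2 t, x3 t, x4 t)"
  by (simp add: x1_def x2_def x3_def x4_def)

lemma xb:
  assumes "t \<ge> 0"
  shows "0 \<le> x1 t" "x1 t \<le> LUb" "0 \<le> x2 t" "x2 t \<le> AUb" "LWb \<le> x3 t" "AWb \<le> x4 t"
    "0 \<le> x3 t" "0 \<le> x4 t"
proof -
  have "(x t, u t) \<in> desirable us LUb AUb LWb AWb" using inD[OF assms] .
  hence h: "0 \<le> x1 t \<and> x1 t \<le> LUb \<and> 0 \<le> x2 t \<and> x2 t \<le> AUb \<and> LWb \<le> x3 t \<and> AWb \<le> x4 t \<and> 0 \<le> x3 t \<and> 0 \<le> x4 t"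
    by (subst (asm) x_eq) (auto simp: desirable_def stateX_def)
  show "0 \<le> x1 t" "x1 t \<le> LUb" "0 \<le> x2 t" "x2 t \<le> AUb" "LWb \<le> x3 t" "AWb \<le> x4 t"
    "0 \<le> x3 t" "0 \<le> x4 t" using h by auto
qed

lemma x0_eq: "x0 = x 0" using sol by (simp add: is_solution_def)

lemma x_int: "t \<ge> 0 \<Longrightarrow> (hx has_integral (x t - x 0)) {0..t}"
proof -
  have e: "hx = (\<lambda>s. fdyn aU aW nu mu k muU muW (x s) (u s))" by (rule ext) (simp add: hx_def)
  assume "t \<ge> 0"
  thus ?thesis using sol x0_eq unfolding is_solution_def e by auto
qed

lemma hx_comp:
  assumes "s \<ge> 0"
  shows "fst (hx s) = aU * (x2 s * (x2 s / (x2 s + x4 s))) - nu * x1 s - mu * (1 + k * (x1 s + x3 s)) * x1 s"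
    "fst (snd (hx s)) = nu * x1 s - muU * x2 s"
    "fst (snd (snd (hx s))) = aW * x4 s - nu * x3 s - mu * (1 + k * (x1 s + x3 s)) * x3 s + u s"
    "snd (snd (snd (hx s))) = nu * x3 s - muW * x4 s"
proof -
  have ne: "x2 s + x4 s \<noteq> 0" using xb[OF assms] pos by linarith
  show "fst (hx s) = aU * (x2 s * (x2 s / (x2 s + x4 s))) - nu * x1 s - mu * (1 + k * (x1 s + x3 s)) * x1 s"
    using ne by (simp add: hx_def fdyn_def FL_def x_eq mult.assoc)
  show "fst (snd (hx s)) = nu * x1 s - muU * x2 s"
    by (simp add: hx_def fdyn_def FA_def x_eq)
  show "fst (snd (snd (hx s))) = aW * x4 s - nu * x3 s - mu * (1 + k * (x1 s + x3 s)) * x3 s + u s"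
    by (simp add: hx_def fdyn_def GL_def x_eq)
  show "snd (snd (snd (hx s))) = nu * x3 s - muW * x4 s"
    by (simp add: hx_def fdyn_def GA_def x_eq)
qed

lemma x_int_comp:
  assumes "t \<ge> 0"
  shows "((\<lambda>s. fst (hx s)) has_integral (x1 t - x1 0)) {0..t}"
    "((\<lambda>s. fst (snd (hx s))) has_integral (x2 t - x2 0)) {0..t}"
    "((\<lambda>s. fst (snd (snd (hx s)))) has_integral (x3 t - x3 0)) {0..t}"
    "((\<lambda>s. snd (snd (snd (hx s)))) has_integral (x4 t - x4 0)) {0..t}"
  using comp_int[OF x_int[OF assms]] by (simp_all add: x1_def x2_def x3_def x4_def)

lemma x_cont_T:
  assumes "T \<ge> 0"
  shows "continuous_on {0..T} x"
proof -
  have hi: "hx integrable_on {0..T}" using x_int[OF assms] by blast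
  have c: "continuous_on {0..T} (\<lambda>t. x 0 + integral {0..t} hx)"
    by (intro continuous_intros indefinite_integral_continuous_1[OF hi])
  show ?thesis
  proof (rule continuous_on_cong[THEN iffD1, OF refl _ c])
    fix t assume "t \<in> {0..T}"
    hence "integral {0..t} hx = x t - x 0" using x_int[of t] by (simp add: integral_unique)
    thus "x 0 + integral {0..t} hx = x t" by simp
  qed
qed

lemma xc_cont: "continuous_on UNIV (\<lambda>s. x (max 0 s))"
proof (rule cont_UNIV_local)
  fix n :: nat
  have c2: "continuous_on {-real n..real n} (\<lambda>t. max 0 t :: real)"
    by (intro continuous_intros)
  show "continuous_on {-real n..real n} (\<lambda>s. x (max 0 s))"
    by (rule continuous_on_compose2[OF x_cont_T[of "real n"] c2]) auto
qed

lemma x_cont: "continuous_on {0..} x"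
proof -
  have "continuous_on {0..} (\<lambda>s. x (max 0 s))" by (rule continuous_on_subset[OF xc_cont]) simp
  thus ?thesis by (rule continuous_on_cong[THEN iffD1, OF refl, rotated]) simp
qed

lemma xi_cont: "continuous_on {0..} x1" "continuous_on {0..} x2" "continuous_on {0..} x3" "continuous_on {0..} x4"
  unfolding x1_def x2_def x3_def x4_def by (auto intro!: continuous_intros x_cont)

lemma xci_cont: "continuous_on UNIV (\<lambda>s. x1 (max 0 s))" "continuous_on UNIV (\<lambda>s. x2 (max 0 s))"
   "continuous_on UNIV (\<lambda>s. x3 (max 0 s))" "continuous_on UNIV (\<lambda>s. x4 (max 0 s))"
  unfolding x1_def x2_def x3_def x4_def by (auto intro!: continuous_intros xc_cont[unfolded o_def])

definition "cV = 2 * aW / muW"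
definition "Ls = (cV * nu + us) / (mu * k) + 1"
definition "As = (cV * nu * Ls + us) / aW"
definition "Mp = max (x3 0 + cV * x4 0) (Ls + cV * As)"

lemma cV_pos: "cV > 0" using pos by (simp add: cV_def)

lemma Mp_nn: "Mp \<ge> 0"
proof -
  have "Ls \<ge> 1" using pos cV_pos by (simp add: Ls_def)
  moreover have "As \<ge> 0" using pos cV_pos \<open>Ls \<ge> 1\<close> by (simp add: As_def)
  ultimately have "Ls + cV * As \<ge> 0" using cV_pos by simp
  thus ?thesis by (simp add: Mp_def)
qed

lemma Vbound:
  assumes t: "t \<ge> 0"
  shows "x3 t + cV * x4 t \<le> Mp"
proof -
  define \<phi> where "\<phi> t = x3 t + cV * x4 t - Mp" for t
  define h where "h s = fst (snd (snd (hx s))) + cV * snd (snd (snd (hx s)))" for s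
  have "\<phi> t \<le> 0"
  proof (rule cmp1[of \<phi> h])
    show "continuous_on {0..} \<phi>" unfolding \<phi>_def by (intro continuous_intros xi_cont)
    show "(h has_integral \<phi> t - \<phi> 0) {0..t}" if "t \<ge> 0" for t
    proof -
      have "(h has_integral (x3 t - x3 0) + cV * (x4 t - x4 0)) {0..t}"
        unfolding h_def by (intro has_integral_add has_integral_mult_right x_int_comp that)
      thus ?thesis by (simp add: \<phi>_def algebra_simps)
    qed
    show "\<phi> 0 \<le> 0" by (simp add: \<phi>_def Mp_def)
    show "h s \<le> 0" if s: "s \<ge> 0" "\<phi> s \<ge> 0" for s
    proof -
      have big: "x3 s + cV * x4 s \<ge> Ls + cV * As" using s by (simp add: \<phi>_def Mp_def)
      have "aW * x4 s - nu * x3 s - mu * (1 + k * (x1 s + x3 s)) * x3 s + u s + cV * (nu * x3 s - muW * x4 s) \<le> 0"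
        by (rule V_arith[OF pos(2,3,4,5,7,8) xb(1,7,8)[OF s(1)] conjunct2[OF uadm[OF s(1)]] cV_def Ls_def As_def big])
      thus ?thesis by (simp add: h_def hx_comp[OF s(1)])
    qed
  qed (rule t)
  thus ?thesis by (simp add: \<phi>_def)
qed

definition "Lm = max (max Mp 1) ((aW * Mp / cV + aW * nu / muW + us) / (mu * k))"
definition "Am = max (Mp / cV) (nu * Lm / muW)"

lemma Lm_ge: "Lm \<ge> Mp" "Lm \<ge> 1" by (simp_all add: Lm_def)
lemma Am_ge: "Am \<ge> Mp / cV" "Am \<ge> nu * Lm / muW" by (simp_all add: Am_def)

lemma x34_box:
  assumes "t \<ge> 0"
  shows "x3 t \<le> Lm" "x4 t \<le> Am"
proof -
  have V: "x3 t + cV * x4 t \<le> Mp" by (rule Vbound[OF assms])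
  have c4: "cV * x4 t \<ge> 0" using cV_pos xb(8)[OF assms] by simp
  show "x3 t \<le> Lm" using V Lm_ge c4 by linarith
  have "x3 t \<ge> 0" using xb(7)[OF assms] .
  hence "cV * x4 t \<le> Mp" using V by linarith
  hence "x4 t \<le> Mp / cV" using cV_pos by (simp add: field_simps)
  thus "x4 t \<le> Am" using Am_ge by linarith
qed

definition "k1 s w = cl 0 (x1 (max 0 s)) (fst w)"
definition "k2 s w = cl 0 (x2 (max 0 s)) (fst (snd w))"
definition "k3 s w = cl (x3 (max 0 s)) Lm (fst (snd (snd w)))"
definition "k4 s w = cl (x4 (max 0 s)) Am (snd (snd (snd w)))"
definition "Gf s w = F4 aU aW nu mu k muU muW us (k1 s w) (k2 s w) (k3 s w) (k4 s w)"
definition "Rb = max (max LUb AUb) (max Lm Am)"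

lemma kb:
  shows "0 \<le> k1 s w" "k1 s w \<le> x1 (max 0 s)" "x1 (max 0 s) \<le> LUb"
    "0 \<le> k2 s w" "k2 s w \<le> x2 (max 0 s)" "x2 (max 0 s) \<le> AUb"
    "x3 (max 0 s) \<le> k3 s w" "k3 s w \<le> Lm" "x4 (max 0 s) \<le> k4 s w" "k4 s w \<le> Am"
    "AWb \<le> x4 (max 0 s)" "0 \<le> x3 (max 0 s)"
proof -
  have r: "max 0 s \<ge> (0::real)" by simp
  note b = xb[OF r] x34_box[OF r]
  show "0 \<le> k1 s w" "k1 s w \<le> x1 (max 0 s)" unfolding k1_def using b by (auto intro: cl_ge cl_le)
  show "0 \<le> k2 s w" "k2 s w \<le> x2 (max 0 s)" unfolding k2_def using b by (auto intro: cl_ge cl_le)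
  show "x3 (max 0 s) \<le> k3 s w" "k3 s w \<le> Lm" unfolding k3_def using b by (auto intro: cl_ge cl_le)
  show "x4 (max 0 s) \<le> k4 s w" "k4 s w \<le> Am" unfolding k4_def using b by (auto intro: cl_ge cl_le)
  show "x1 (max 0 s) \<le> LUb" "x2 (max 0 s) \<le> AUb" "AWb \<le> x4 (max 0 s)" "0 \<le> x3 (max 0 s)" using b by auto
qed

lemma kR:
  shows "0 \<le> k1 s w" "k1 s w \<le> Rb" "0 \<le> k2 s w" "k2 s w \<le> Rb"
    "0 \<le> k3 s w" "k3 s w \<le> Rb" "0 < k4 s w" "k4 s w \<le> Rb"
proof -
  note b = kb(1,2,4,5,7,8,9,10)[of s w] kb(3,6,11,12)[of s]
  have "Rb \<ge> LUb" "Rb \<ge> AUb" "Rb \<ge> Lm" "Rb \<ge> Am" by (auto simp: Rb_def)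
  thus "0 \<le> k1 s w" "k1 s w \<le> Rb" "0 \<le> k2 s w" "k2 s w \<le> Rb"
    "0 \<le> k3 s w" "k3 s w \<le> Rb" "0 < k4 s w" "k4 s w \<le> Rb" using b pos by linarith+
qed

definition "Bc = (aU * Rb + nu * Rb + mu * (1 + k * (2 * Rb)) * Rb) + (nu * Rb + muU * Rb) +
     (aW * Rb + nu * Rb + mu * (1 + k * (2 * Rb)) * Rb + us) + (nu * Rb + muW * Rb)"
definition "Lc = ((2 * aU + nu + mu + 6 * mu * k * Rb) + (nu + muU) + (aW + nu + mu + 6 * mu * k * Rb) + (nu + muW))"

lemma Gb: "norm (Gf s w) \<le> Bc"
  unfolding Gf_def Bc_def by (rule F4_bound[OF pos(1-8) kR])

lemma Lc_pos: "Lc > 0"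
proof -
  have "Rb \<ge> 0" using kR(1,2) by (rule order.trans)
  hence "mu * k * Rb \<ge> 0" using pos by simp
  thus ?thesis using pos unfolding Lc_def by linarith
qed

lemma Gl: "norm (Gf s w - Gf s w') \<le> Lc * norm (w - w')"
proof -
  have x1n: "0 \<le> x1 (max 0 s)" "0 \<le> x2 (max 0 s)" "x3 (max 0 s) \<le> Lm" "x4 (max 0 s) \<le> Am"
    using kb(1,2,4,5,7,8,9,10)[of s w] kb(3,6,11,12)[of s] by linarith+
  have d: "\<bar>k1 s w - k1 s w'\<bar> \<le> norm (w - w')" "\<bar>k2 s w - k2 s w'\<bar> \<le> norm (w - w')"
    "\<bar>k3 s w - k3 s w'\<bar> \<le> norm (w - w')" "\<bar>k4 s w - k4 s w'\<bar> \<le> norm (w - w')"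
  proof -
    have cn: "\<bar>fst w - fst w'\<bar> \<le> norm (w - w')" "\<bar>fst (snd w) - fst (snd w')\<bar> \<le> norm (w - w')"
      "\<bar>fst (snd (snd w)) - fst (snd (snd w'))\<bar> \<le> norm (w - w')"
      "\<bar>snd (snd (snd w)) - snd (snd (snd w'))\<bar> \<le> norm (w - w')"
      using comp_le_norm[of "w - w'"] by simp_all
    show "\<bar>k1 s w - k1 s w'\<bar> \<le> norm (w - w')" unfolding k1_def
      by (rule order_trans[OF cl_lip[OF x1n(1)] cn(1)])
    show "\<bar>k2 s w - k2 s w'\<bar> \<le> norm (w - w')" unfolding k2_def
      by (rule order_trans[OF cl_lip[OF x1n(2)] cn(2)])
    show "\<bar>k3 s w - k3 s w'\<bar> \<le> norm (w - w')" unfolding k3_def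
      by (rule order_trans[OF cl_lip[OF x1n(3)] cn(3)])
    show "\<bar>k4 s w - k4 s w'\<bar> \<le> norm (w - w')" unfolding k4_def
      by (rule order_trans[OF cl_lip[OF x1n(4)] cn(4)])
  qed
  show ?thesis unfolding Gf_def Lc_def by (rule F4_lip[OF pos(1-8) kR kR d])
qed

lemma ki_cont:
  assumes "continuous_on UNIV y"
  shows "continuous_on UNIV (\<lambda>s. k1 s (y s))" "continuous_on UNIV (\<lambda>s. k2 s (y s))"
    "continuous_on UNIV (\<lambda>s. k3 s (y s))" "continuous_on UNIV (\<lambda>s. k4 s (y s))"
  unfolding k1_def k2_def k3_def k4_def cl_def
  by (intro continuous_intros xci_cont assms)+

lemma Gc:
  assumes "continuous_on UNIV y"
  shows "continuous_on UNIV (\<lambda>s. Gf s (y s))"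
proof -
  note kc = ki_cont[OF assms]
  have nz: "\<forall>s\<in>UNIV. k2 s (y s) + k4 s (y s) \<noteq> 0"
  proof
    fix s :: real
    have "0 \<le> k2 s (y s)" "0 < k4 s (y s)" using kR(3,7) .
    thus "k2 s (y s) + k4 s (y s) \<noteq> 0" by linarith
  qed
  show ?thesis unfolding Gf_def F4_def
    by (intro continuous_intros kc nz)
qed


lemma Gf_comp:
  shows "fst (Gf s w) = aU * (k2 s w * (k2 s w / (k2 s w + k4 s w))) - nu * k1 s w - mu * (1 + k * (k1 s w + k3 s w)) * k1 s w"
    "fst (snd (Gf s w)) = nu * k1 s w - muU * k2 s w"
    "fst (snd (snd (Gf s w))) = aW * k4 s w - nu * k3 s w - mu * (1 + k * (k1 s w + k3 s w)) * k3 s w + us"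
    "snd (snd (snd (Gf s w))) = nu * k3 s w - muW * k4 s w"
  by (simp_all add: Gf_def F4_def)

lemma y_exists:
  "\<exists>y. is_solution (\<lambda>x u. fdyn aU aW nu mu k muU muW x us) (\<lambda>_. us) x0 y \<and>
      (\<forall>t\<ge>0. (y t, us) \<in> desirable us LUb AUb LWb AWb)"
proof -
  obtain y where ycont: "continuous_on UNIV y"
    and yint: "\<And>t. t \<ge> 0 \<Longrightarrow> ((\<lambda>s. Gf s (y s)) has_integral (y t - x0)) {0..t}"
    using picard_global[of Gf Bc Lc x0, OF Gc Gb Gl Lc_pos] by blast
  have y0: "y 0 = x0"
  proof -
    have "((\<lambda>s. Gf s (y s)) has_integral (y 0 - x0)) {0}" using yint[of 0] by simp
    moreover have "((\<lambda>s. Gf s (y s)) has_integral 0) {0}" by (rule has_integral_refl(2))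
    ultimately have "y 0 - x0 = 0" by (rule has_integral_unique)
    thus ?thesis by simp
  qed
  define y1 where "y1 t = fst (y t)" for t
  define y2 where "y2 t = fst (snd (y t))" for t
  define y3 where "y3 t = fst (snd (snd (y t)))" for t
  define y4 where "y4 t = snd (snd (snd (y t)))" for t
  have y_eq: "y t = (y1 t, y2 t, y3 t, y4 t)" for t by (simp add: y1_def y2_def y3_def y4_def)
  have yc: "continuous_on {0..} y" by (rule continuous_on_subset[OF ycont]) simp
  have yic: "continuous_on {0..} y1" "continuous_on {0..} y2" "continuous_on {0..} y3" "continuous_on {0..} y4"
    unfolding y1_def y2_def y3_def y4_def by (intro continuous_intros yc)+
  have x0c: "x0 = (x1 0, x2 0, x3 0, x4 0)" using x0_eq x_eq by simp
  have y0c: "y1 0 = x1 0" "y2 0 = x2 0" "y3 0 = x3 0" "y4 0 = x4 0"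
    using y0 x0c by (simp_all add: y1_def y2_def y3_def y4_def)
  define g1 where "g1 s = fst (Gf s (y s))" for s
  define g2 where "g2 s = fst (snd (Gf s (y s)))" for s
  define g3 where "g3 s = fst (snd (snd (Gf s (y s))))" for s
  define g4 where "g4 s = snd (snd (snd (Gf s (y s))))" for s
  have yint_c: "(g1 has_integral (y1 t - y1 0)) {0..t}" "(g2 has_integral (y2 t - y2 0)) {0..t}"
    "(g3 has_integral (y3 t - y3 0)) {0..t}" "(g4 has_integral (y4 t - y4 0)) {0..t}" if "t \<ge> 0" for t
  proof -
    note ci = comp_int[OF yint[OF that]]
    have e: "x0 = y 0" using y0 by simp
    show "(g1 has_integral (y1 t - y1 0)) {0..t}" using ci(1) unfolding g1_def y1_def e by simp
    show "(g2 has_integral (y2 t - y2 0)) {0..t}" using ci(2) unfolding g2_def y2_def e by simp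
    show "(g3 has_integral (y3 t - y3 0)) {0..t}" using ci(3) unfolding g3_def y3_def e by simp
    show "(g4 has_integral (y4 t - y4 0)) {0..t}" using ci(4) unfolding g4_def y4_def e by simp
  qed
  define h1 where "h1 s = fst (hx s)" for s
  define h2 where "h2 s = fst (snd (hx s))" for s
  define h3 where "h3 s = fst (snd (snd (hx s)))" for s
  define h4 where "h4 s = snd (snd (snd (hx s)))" for s
  have xint_c: "(h1 has_integral (x1 t - x1 0)) {0..t}" "(h2 has_integral (x2 t - x2 0)) {0..t}"
    "(h3 has_integral (x3 t - x3 0)) {0..t}" "(h4 has_integral (x4 t - x4 0)) {0..t}" if "t \<ge> 0" for t
    using x_int_comp[OF that] unfolding h1_def h2_def h3_def h4_def by simp_all
  have cint: "((\<lambda>s. 0) has_integral ((\<lambda>t. c) t - (\<lambda>t. c) 0)) {0..t}" for c :: real and t :: real by simp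
  have cc: "continuous_on {0..} (\<lambda>t. c)" for c :: real by simp
  note xic = xi_cont
  have kk: "k1 s (y s) = cl 0 (x1 s) (y1 s)" "k2 s (y s) = cl 0 (x2 s) (y2 s)"
    "k3 s (y s) = cl (x3 s) Lm (y3 s)" "k4 s (y s) = cl (x4 s) Am (y4 s)" if "s \<ge> 0" for s
    using that by (simp_all add: k1_def k2_def k3_def k4_def y1_def y2_def y3_def y4_def)
  have gg: "g1 s = aU * (k2 s (y s) * (k2 s (y s) / (k2 s (y s) + k4 s (y s)))) - nu * k1 s (y s) - mu * (1 + k * (k1 s (y s) + k3 s (y s))) * k1 s (y s)"
    "g2 s = nu * k1 s (y s) - muU * k2 s (y s)"
    "g3 s = aW * k4 s (y s) - nu * k3 s (y s) - mu * (1 + k * (k1 s (y s) + k3 s (y s))) * k3 s (y s) + us"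
    "g4 s = nu * k3 s (y s) - muW * k4 s (y s)" for s
    unfolding g1_def g2_def g3_def g4_def by (rule Gf_comp)+
  have hh: "h1 s = aU * (x2 s * (x2 s / (x2 s + x4 s))) - nu * x1 s - mu * (1 + k * (x1 s + x3 s)) * x1 s"
    "h2 s = nu * x1 s - muU * x2 s"
    "h3 s = aW * x4 s - nu * x3 s - mu * (1 + k * (x1 s + x3 s)) * x3 s + u s"
    "h4 s = nu * x3 s - muW * x4 s" if "s \<ge> 0" for s
    unfolding h1_def h2_def h3_def h4_def using hx_comp[OF that] by simp_all
  have kbs: "0 \<le> k1 s (y s)" "k1 s (y s) \<le> x1 s" "0 \<le> k2 s (y s)" "k2 s (y s) \<le> x2 s"
    "x3 s \<le> k3 s (y s)" "k3 s (y s) \<le> Lm" "x4 s \<le> k4 s (y s)" "k4 s (y s) \<le> Am" if "s \<ge> 0" for s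
    using kb(1,2,4,5,7,8,9,10)[of s "y s"] that by simp_all
  note xbs = xb x34_box
  have ca: "y1 t \<le> x1 t" if t: "t \<ge> 0" for t
  proof (rule cmp_gen[OF yic(1) xic(1) yint_c(1) xint_c(1) _ _ t])
    show "y1 0 \<le> x1 0" using y0c by simp
    fix s :: real assume s: "s \<ge> 0" "y1 s \<ge> x1 s"
    have k1e: "k1 s (y s) = x1 s" using kk(1)[OF s(1)] cl_high[OF s(2) xbs(1)[OF s(1)]] by simp
    have q: "k2 s (y s) * (k2 s (y s) / (k2 s (y s) + k4 s (y s))) \<le> x2 s * (x2 s / (x2 s + x4 s))"
      by (rule q_mono) (use kbs[OF s(1)] xbs(6)[OF s(1)] pos in auto)
    have m: "mu * (1 + k * (x1 s + x3 s)) * x1 s \<le> mu * (1 + k * (x1 s + k3 s (y s))) * x1 s"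
      using kbs[OF s(1)] xbs(1)[OF s(1)] pos by (intro mult_right_mono mult_left_mono) auto
    have "aU * (k2 s (y s) * (k2 s (y s) / (k2 s (y s) + k4 s (y s)))) \<le> aU * (x2 s * (x2 s / (x2 s + x4 s)))"
      using q pos by (intro mult_left_mono) auto
    thus "g1 s \<le> h1 s" using m unfolding gg(1) hh(1)[OF s(1)] k1e by linarith
  qed
  have cb: "0 \<le> y1 t" if t: "t \<ge> 0" for t
  proof -
    have "(\<lambda>t. 0::real) t \<le> y1 t"
    proof (rule cmp_gen[OF cc yic(1) cint yint_c(1) _ _ t])
      show "0 \<le> y1 0" using y0c xbs(1)[of 0] by simp
      fix s :: real assume s: "s \<ge> 0" "(\<lambda>t. 0::real) s \<ge> y1 s"
      have k1e: "k1 s (y s) = 0" using kk(1)[OF s(1)] cl_low[of "y1 s" 0 "x1 s"] s xbs(1)[OF s(1)] by simp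
      have "0 \<le> k2 s (y s) * (k2 s (y s) / (k2 s (y s) + k4 s (y s)))"
        using q_bound(1)[of "k2 s (y s)" "k2 s (y s)" "k4 s (y s)"] kR(3,7) by simp
      hence "0 \<le> aU * (k2 s (y s) * (k2 s (y s) / (k2 s (y s) + k4 s (y s))))"
        by (rule mult_nonneg_nonneg[OF less_imp_le[OF pos(1)]])
      thus "0 \<le> g1 s" unfolding gg(1) k1e by simp
    qed
    thus ?thesis by simp
  qed
  have cc2: "y2 t \<le> x2 t" if t: "t \<ge> 0" for t
  proof (rule cmp_gen[OF yic(2) xic(2) yint_c(2) xint_c(2) _ _ t])
    show "y2 0 \<le> x2 0" using y0c by simp
    fix s :: real assume s: "s \<ge> 0" "y2 s \<ge> x2 s"
    have k2e: "k2 s (y s) = x2 s" using kk(2)[OF s(1)] cl_high[OF s(2) xbs(3)[OF s(1)]] by simp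
    have "nu * k1 s (y s) \<le> nu * x1 s" using kbs[OF s(1)] pos by simp
    thus "g2 s \<le> h2 s" unfolding gg(2) hh(2)[OF s(1)] k2e by linarith
  qed
  have cd: "0 \<le> y2 t" if t: "t \<ge> 0" for t
  proof -
    have "(\<lambda>t. 0::real) t \<le> y2 t"
    proof (rule cmp_gen[OF cc yic(2) cint yint_c(2) _ _ t])
      show "0 \<le> y2 0" using y0c xbs(3)[of 0] by simp
      fix s :: real assume s: "s \<ge> 0" "(\<lambda>t. 0::real) s \<ge> y2 s"
      have k2e: "k2 s (y s) = 0" using kk(2)[OF s(1)] cl_low[of "y2 s" 0 "x2 s"] s xbs(3)[OF s(1)] by simp
      have "0 \<le> nu * k1 s (y s)" using kbs[OF s(1)] pos by simp
      thus "0 \<le> g2 s" unfolding gg(2) k2e by simp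
    qed
    thus ?thesis by simp
  qed
  have ce: "x3 t \<le> y3 t" if t: "t \<ge> 0" for t
  proof (rule cmp_gen[OF xic(3) yic(3) xint_c(3) yint_c(3) _ _ t])
    show "x3 0 \<le> y3 0" using y0c by simp
    fix s :: real assume s: "s \<ge> 0" "x3 s \<ge> y3 s"
    have k3e: "k3 s (y s) = x3 s" using kk(3)[OF s(1)] cl_low[OF s(2) xbs(9)[OF s(1)]] by simp
    have m: "mu * (1 + k * (k1 s (y s) + x3 s)) * x3 s \<le> mu * (1 + k * (x1 s + x3 s)) * x3 s"
      using kbs[OF s(1)] xbs(7)[OF s(1)] pos by (intro mult_right_mono mult_left_mono) auto
    have "aW * x4 s \<le> aW * k4 s (y s)" using kbs[OF s(1)] pos by simp
    moreover have "u s \<le> us" using uadm[OF s(1)] by simp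
    ultimately show "h3 s \<le> g3 s" using m unfolding gg(3) hh(3)[OF s(1)] k3e by linarith
  qed
  have cf: "x4 t \<le> y4 t" if t: "t \<ge> 0" for t
  proof (rule cmp_gen[OF xic(4) yic(4) xint_c(4) yint_c(4) _ _ t])
    show "x4 0 \<le> y4 0" using y0c by simp
    fix s :: real assume s: "s \<ge> 0" "x4 s \<ge> y4 s"
    have k4e: "k4 s (y s) = x4 s" using kk(4)[OF s(1)] cl_low[OF s(2) xbs(10)[OF s(1)]] by simp
    have "nu * x3 s \<le> nu * k3 s (y s)" using kbs[OF s(1)] pos by simp
    thus "h4 s \<le> g4 s" unfolding gg(4) hh(4)[OF s(1)] k4e by linarith
  qed
  have cg: "y3 t \<le> Lm" if t: "t \<ge> 0" for t
  proof -
    have "y3 t \<le> (\<lambda>t. Lm) t"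
    proof (rule cmp_gen[OF yic(3) cc yint_c(3) cint _ _ t])
      show "y3 0 \<le> Lm" using y0c xbs(9)[of 0] by simp
      fix s :: real assume s: "s \<ge> 0" "y3 s \<ge> (\<lambda>t. Lm) s"
      have k3e: "k3 s (y s) = Lm" using kk(3)[OF s(1)] cl_high[of Lm "y3 s" "x3 s"] s xbs(9)[OF s(1)] by simp
      have "aW * k4 s (y s) - nu * Lm - mu * (1 + k * (k1 s (y s) + Lm)) * Lm + us \<le> 0"
        by (rule boxW_ineq[OF pos(2,3,4,5,7,8) cV_pos Mp_nn Lm_def Am_def]) (use kbs[OF s(1)] in auto)
      thus "g3 s \<le> 0" unfolding gg(3) k3e by simp
    qed
    thus ?thesis by simp
  qed
  have ch: "y4 t \<le> Am" if t: "t \<ge> 0" for t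
  proof -
    have "y4 t \<le> (\<lambda>t. Am) t"
    proof (rule cmp_gen[OF yic(4) cc yint_c(4) cint _ _ t])
      show "y4 0 \<le> Am" using y0c xbs(10)[of 0] by simp
      fix s :: real assume s: "s \<ge> 0" "y4 s \<ge> (\<lambda>t. Am) s"
      have k4e: "k4 s (y s) = Am" using kk(4)[OF s(1)] cl_high[of Am "y4 s" "x4 s"] s xbs(10)[OF s(1)] by simp
      have "nu * k3 s (y s) \<le> nu * Lm" using kbs[OF s(1)] pos by simp
      moreover have "nu * Lm \<le> muW * Am" using Am_ge(2) pos by (simp add: field_simps)
      ultimately show "g4 s \<le> 0" unfolding gg(4) k4e by simp
    qed
    thus ?thesis by simp
  qed
  \<comment> \<open>clamps are inactive\<close>
  have Geq: "Gf s (y s) = fdyn aU aW nu mu k muU muW (y s) us" if s: "s \<ge> 0" for s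
  proof -
    have e1: "k1 s (y s) = y1 s" using kk(1)[OF s] cl_id[OF cb[OF s] ca[OF s]] by simp
    have e2: "k2 s (y s) = y2 s" using kk(2)[OF s] cl_id[OF cd[OF s] cc2[OF s]] by simp
    have e3: "k3 s (y s) = y3 s" using kk(3)[OF s] cl_id[OF ce[OF s] cg[OF s]] by simp
    have e4: "k4 s (y s) = y4 s" using kk(4)[OF s] cl_id[OF cf[OF s] ch[OF s]] by simp
    have ne: "y2 s + y4 s \<noteq> 0" using cd[OF s] cf[OF s] xbs(6)[OF s] pos by linarith
    show ?thesis unfolding Gf_def e1 e2 e3 e4 F4_def
      using ne by (simp add: y_eq[of s] fdyn_def FL_def FA_def GL_def GA_def mult.assoc)
  qed
  have "is_solution (\<lambda>x u. fdyn aU aW nu mu k muU muW x us) (\<lambda>_. us) x0 y"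
    unfolding is_solution_def
  proof (intro conjI allI impI)
    show "y 0 = x0" by (rule y0)
    fix t :: real assume t: "0 \<le> t"
    show "y t \<in> stateX" using y_eq[of t] cb[OF t] cd[OF t] ce[OF t] cf[OF t] xbs(7,8)[OF t]
      by (simp add: stateX_def)
    show "((\<lambda>s. fdyn aU aW nu mu k muU muW (y s) us) has_integral y t - x0) {0..t}"
      by (rule has_integral_eq[OF _ yint[OF t]]) (simp add: Geq)
  qed
  moreover have "\<forall>t\<ge>0. (y t, us) \<in> desirable us LUb AUb LWb AWb"
  proof (intro allI impI)
    fix t :: real assume t: "0 \<le> t"
    show "(y t, us) \<in> desirable us LUb AUb LWb AWb"
      using y_eq[of t] cb[OF t] cd[OF t] ce[OF t] cf[OF t] ca[OF t] cc2[OF t] xbs(1-8)[OF t] pos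
      by (simp add: desirable_def stateX_def)
  qed
  ultimately show ?thesis by blast
qed

end

theorem mainTheorem4:
  fixes \<alpha>U \<alpha>W \<nu> \<mu> k \<mu>U \<mu>W us LUb AUb LWb AWb :: real
  assumes "\<alpha>U > 0" "\<alpha>W > 0" "\<nu> > 0" "\<mu> > 0" "k > 0" "\<mu>U > 0" "\<mu>W > 0"
    and "us > 0"
    and "LUb > 0" "AUb > 0" "LWb > 0" "AWb > 0"
  shows "viab (fdyn \<alpha>U \<alpha>W \<nu> \<mu> k \<mu>U \<mu>W) us (desirable us LUb AUb LWb AWb)
       = viab (\<lambda>x u. fdyn \<alpha>U \<alpha>W \<nu> \<mu> k \<mu>U \<mu>W x us) us (desirable us LUb AUb LWb AWb)"
proof -
  have adm: "admissible_control us (\<lambda>_. us)"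
    unfolding admissible_control_def using assms(8) by auto
  show ?thesis
  proof (rule set_eqI, rule iffI)
    fix x0 assume "x0 \<in> viab (fdyn \<alpha>U \<alpha>W \<nu> \<mu> k \<mu>U \<mu>W) us (desirable us LUb AUb LWb AWb)"
    then obtain u x where x0X: "x0 \<in> stateX" and ua: "admissible_control us u"
      and sol: "is_solution (fdyn \<alpha>U \<alpha>W \<nu> \<mu> k \<mu>U \<mu>W) u x0 x"
      and D: "\<forall>t\<ge>0. (x t, u t) \<in> desirable us LUb AUb LWb AWb"
      unfolding viab_def by blast
    have uadm: "\<And>t. t \<ge> 0 \<Longrightarrow> 0 \<le> u t \<and> u t \<le> us" using ua unfolding admissible_control_def by auto
    obtain y where "is_solution (\<lambda>x u. fdyn \<alpha>U \<alpha>W \<nu> \<mu> k \<mu>U \<mu>W x us) (\<lambda>_. us) x0 y"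
      and "\<forall>t\<ge>0. (y t, us) \<in> desirable us LUb AUb LWb AWb"
      using y_exists[OF assms uadm sol] D by blast
    thus "x0 \<in> viab (\<lambda>x u. fdyn \<alpha>U \<alpha>W \<nu> \<mu> k \<mu>U \<mu>W x us) us (desirable us LUb AUb LWb AWb)"
      unfolding viab_def using x0X adm by blast
  next
    fix x0 assume "x0 \<in> viab (\<lambda>x u. fdyn \<alpha>U \<alpha>W \<nu> \<mu> k \<mu>U \<mu>W x us) us (desirable us LUb AUb LWb AWb)"
    then obtain u x where x0X: "x0 \<in> stateX"
      and sol: "is_solution (\<lambda>x u. fdyn \<alpha>U \<alpha>W \<nu> \<mu> k \<mu>U \<mu>W x us) u x0 x"
      and D: "\<forall>t\<ge>0. (x t, u t) \<in> desirable us LUb AUb LWb AWb"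
      unfolding viab_def by blast
    have sol': "is_solution (fdyn \<alpha>U \<alpha>W \<nu> \<mu> k \<mu>U \<mu>W) (\<lambda>_. us) x0 x"
      using sol unfolding is_solution_def by simp
    have D': "\<forall>t\<ge>0. (x t, us) \<in> desirable us LUb AUb LWb AWb"
    proof (intro allI impI)
      fix t :: real assume "t \<ge> 0"
      hence "(x t, u t) \<in> desirable us LUb AUb LWb AWb" using D by blast
      thus "(x t, us) \<in> desirable us LUb AUb LWb AWb" using assms(8)
        by (cases "x t") (auto simp: desirable_def)
    qed
    show "x0 \<in> viab (fdyn \<alpha>U \<alpha>W \<nu> \<mu> k \<mu>U \<mu>W) us (desirable us LUb AUb LWb AWb)"
      unfolding viab_def using x0X adm sol' D' by blast
  qed
qed

end
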